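(* Let $p>1$, $\alpha\in\mathbb{R}$. For each $T>0$ there exists exactly one positive solution $\psi$ of $$\psi'(t)=\psi^p(t)\ln^\alpha(\psi^2(t)+2),\qquad \lim_{t\to T}\psi(t)=+\infty.$$ Moreover, $$\psi(t)\sim\kappa_\alpha(T-t)^{-\frac1{p-1}}|\ln(T-t)|^{-\frac{\alpha}{p-1}}\quad\text{as }t\to T,\qquad \kappa_\alpha=(p-1)^{-\frac1{p-1}}\left(\frac{p-1}2\right)^{\frac{\alpha}{p-1}}.$$ *)

theory Defs
  imports "HOL-Analysis.Analysis" "HOL-Library.Landau_Symbols"
begin

definition blowup_solution :: "real \<Rightarrow> real \<Rightarrow> real \<Rightarrow> (real \<Rightarrow> real) \<Rightarrow> bool" where
  "blowup_solution p \<alpha> T \<psi> \<longleftrightarrow>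
     (\<forall>t<T. \<psi> t > 0 \<and>
        (\<psi> has_real_derivative ((\<psi> t) powr p * (ln ((\<psi> t)\<^sup>2 + 2)) powr \<alpha>)) (at t)) \<and>
     filterlim \<psi> at_top (at_left T)"

definition kappa :: "real \<Rightarrow> real \<Rightarrow> real" where
  "kappa p \<alpha> = (p - 1) powr (-1 / (p - 1)) * ((p - 1) / 2) powr (\<alpha> / (p - 1))"

end

theory Submission
  imports Defs "HOL-Real_Asymp.Real_Asymp"
begin


lemma lhopital_at_top_0:
  fixes f g :: "real \<Rightarrow> real"
  assumes f0: "(f \<longlongrightarrow> 0) at_top" and g0: "(g \<longlongrightarrow> 0) at_top"
    and gn: "eventually (\<lambda>x. g x \<noteq> 0) at_top"
    and g': "eventually (\<lambda>x. g' x \<noteq> 0) at_top"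
    and Df: "eventually (\<lambda>x. DERIV f x :> f' x) at_top"
    and Dg: "eventually (\<lambda>x. DERIV g x :> g' x) at_top"
    and lim: "((\<lambda> x. (f' x / g' x)) \<longlongrightarrow> y) at_top"
  shows "((\<lambda> x. f x / g x) \<longlongrightarrow> y) at_top"
  unfolding filterlim_at_top_to_right
proof (rule lhopital_right_0)
  let ?F = "\<lambda>x. f (inverse x)"
  let ?G = "\<lambda>x. g (inverse x)"
  let ?R = "at_right (0::real)"
  let ?D = "\<lambda>f' x. f' (inverse x) * - (inverse x ^ Suc (Suc 0))"
  show "(?F \<longlongrightarrow> 0) ?R" using f0 unfolding filterlim_at_top_to_right .
  show "(?G \<longlongrightarrow> 0) ?R" using g0 unfolding filterlim_at_top_to_right .
  show "eventually (\<lambda>x. ?G x \<noteq> 0) ?R" using gn unfolding eventually_at_right_to_top by simp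
  show "eventually (\<lambda>x. DERIV ?G x  :> ?D g' x) ?R"
    unfolding eventually_at_right_to_top
    using Dg eventually_ge_at_top[where c=1]
    by eventually_elim (rule derivative_eq_intros DERIV_chain'[where f=inverse] | simp)+
  show "eventually (\<lambda>x. DERIV ?F x  :> ?D f' x) ?R"
    unfolding eventually_at_right_to_top
    using Df eventually_ge_at_top[where c=1]
    by eventually_elim (rule derivative_eq_intros DERIV_chain'[where f=inverse] | simp)+
  show "eventually (\<lambda>x. ?D g' x \<noteq> 0) ?R"
    unfolding eventually_at_right_to_top
    using g' eventually_ge_at_top[where c=1]
    by eventually_elim auto
  show "((\<lambda>x. ?D f' x / ?D g' x) \<longlongrightarrow> y) ?R"
    unfolding filterlim_at_right_to_top
    apply (intro filterlim_cong[THEN iffD2, OF refl refl _ lim])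
    using eventually_ge_at_top[where c=1]
    by eventually_elim simp
qed

lemma my_inverse_strong:
  fixes f :: "real \<Rightarrow> real"
  shows "\<lbrakk>DERIV f x :> f'; f' \<noteq> 0; open S; x \<in> S; continuous_on S f;
         \<And>z. z \<in> S \<Longrightarrow> g (f z) = z\<rbrakk>
         \<Longrightarrow> DERIV g (f x) :> inverse (f')"
  unfolding has_field_derivative_def
  by (rule has_derivative_inverse_strong [of S x f g]) auto

lemma antideriv:
  fixes h :: "real \<Rightarrow> real"
  assumes "continuous_on {0<..} h"
  shows "\<exists>H. \<forall>x>0. (H has_real_derivative h x) (at x)"
proof -
  define H where "H x = integral {1..x} h - integral {x..1} h" for x
  have "(H has_real_derivative h x) (at x)" if "x > 0" for x
  proof -
    define a where "a = min (x/2) (1/2)"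
    define b where "b = max (x+1) 2"
    have ab: "0 < a" "a < x" "x < b" "a < 1" "1 < b" using that by (auto simp: a_def b_def)
    have cont: "continuous_on {a..b} h" using assms by (rule continuous_on_subset) (use ab in auto)
    have int: "h integrable_on {a..b}" using cont integrable_continuous_real by blast
    have eq: "H u = integral {a..u} h - integral {a..1} h" if "u \<in> {a<..<b}" for u
    proof (cases "u \<ge> 1")
      case True
      have "integral {a..1} h + integral {1..u} h = integral {a..u} h"
        by (rule Henstock_Kurzweil_Integration.integral_combine) (use True ab that in \<open>auto intro: integrable_on_subinterval[OF int]\<close>)
      moreover have "integral {u..1} h = 0" using True
        by (cases "u = 1") auto
      ultimately show ?thesis by (simp add: H_def)
    next
      case False
      have "integral {a..u} h + integral {u..1} h = integral {a..1} h"
        by (rule Henstock_Kurzweil_Integration.integral_combine) (use False ab that in \<open>auto intro: integrable_on_subinterval[OF int]\<close>)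
      moreover have "integral {1..u} h = 0" using False by auto
      ultimately show ?thesis by (simp add: H_def)
    qed
    have "((\<lambda>u. integral {a..u} h) has_real_derivative h x) (at x within {a..b})"
      by (rule integral_has_real_derivative[OF cont]) (use ab in auto)
    hence "((\<lambda>u. integral {a..u} h) has_real_derivative h x) (at x)"
      using ab by (simp add: at_within_Icc_at)
    hence "((\<lambda>u. integral {a..u} h - integral {a..1} h) has_real_derivative h x) (at x)"
      by (auto intro!: derivative_eq_intros)
    thus ?thesis
      by (rule has_field_derivative_transform_within_open[where S="{a<..<b}"]) (use ab eq in auto)
  qed
  thus ?thesis by blast
qed

lemma "(p::real) > 1 \<Longrightarrow> filterlim (\<lambda>x::real. x powr (1-p)) at_top (at_right 0)"
  by real_asymp

lemma "((\<lambda>x::real. ln (ln (x^2+2)) / ln x) \<longlongrightarrow> 0) at_top"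
  by real_asymp
lemma "((\<lambda>x::real. ln (x^2+2) / ln x) \<longlongrightarrow> 2) at_top"
  by real_asymp



definition hf :: "real \<Rightarrow> real \<Rightarrow> real \<Rightarrow> real" where
  "hf p \<alpha> x = x powr (-p) * ln (x\<^sup>2 + 2) powr (-\<alpha>)"

lemma ln_pos2: "ln ((x::real)\<^sup>2 + 2) > 0"
  by (rule ln_gt_zero) (smt (verit) zero_le_power2)

lemma sq2_pos[simp]: "(x::real)\<^sup>2 + 2 > 0" "1 + (x::real)\<^sup>2 \<noteq> 0" "(x::real)\<^sup>2 + 2 \<noteq> 0"
  by (smt (verit) zero_le_power2)+

lemma hf_pos: "x > 0 \<Longrightarrow> hf p \<alpha> x > 0"
  using ln_pos2[of x] by (simp add: hf_def)

lemma hf_cont: "continuous_on {0<..} (hf p \<alpha>)"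
  unfolding hf_def using ln_pos2
  by (intro continuous_intros) (auto simp: add_pos_nonneg)

lemma hf_upper:
  assumes p1: "p > 1"
  shows "\<exists>C>0. \<forall>x\<ge>1. hf p \<alpha> x \<le> C * x powr (-((p+1)/2))"
proof (cases "\<alpha> \<ge> 0")
  case True
  have "hf p \<alpha> x \<le> ln 2 powr (-\<alpha>) * x powr (-((p+1)/2))" if x: "x \<ge> 1" for x
  proof -
    have "ln (x\<^sup>2+2) \<ge> ln 2" using ln_le_cancel_iff[of 2 "x\<^sup>2+2"] by simp
    hence a: "ln (x\<^sup>2+2) powr (-\<alpha>) \<le> ln 2 powr (-\<alpha>)"
      using True by (intro powr_mono2') auto
    have b: "x powr (-p) \<le> x powr (-((p+1)/2))" using p1 x by (intro powr_mono) auto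
    show ?thesis unfolding hf_def
      by (metis a b mult.commute mult_mono powr_ge_zero)
  qed
  thus ?thesis by (intro exI[of _ "ln 2 powr (-\<alpha>)"]) auto
next
  case False
  define a where "a = -\<alpha>"
  define d where "d = (p-1)/(4*a)"
  have a0: "a > 0" using False by (auto simp: a_def)
  hence d0: "d > 0" using p1 by (auto simp: d_def)
  define C where "C = (3 powr d / d) powr a"
  have "hf p \<alpha> x \<le> C * x powr (-((p+1)/2))" if x: "x \<ge> 1" for x
  proof -
    have "ln (x\<^sup>2+2) \<le> (x\<^sup>2+2) powr d / d" using d0 by (intro ln_powr_bound) auto
    also have "(x\<^sup>2+2) powr d \<le> (3 * x\<^sup>2) powr d"
    proof (rule powr_mono2)
      have "x\<^sup>2 \<ge> 1" using x by (simp add: one_le_power)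
      thus "x\<^sup>2 + 2 \<le> 3 * x\<^sup>2" by linarith
    qed (use d0 in auto)
    also have "(3 * x\<^sup>2) powr d = 3 powr d * x powr (2*d)"
    proof -
      have "x\<^sup>2 = x powr 2" using x by (simp add: powr_numeral)
      hence "(x\<^sup>2) powr d = x powr (2*d)" by (simp add: powr_powr)
      moreover have "(3 * x\<^sup>2) powr d = 3 powr d * (x\<^sup>2) powr d" by (simp add: powr_mult)
      ultimately show ?thesis by simp
    qed
    finally have l: "ln (x\<^sup>2+2) \<le> 3 powr d / d * x powr (2*d)"
      using d0 by (simp add: divide_right_mono)
    have "ln (x\<^sup>2+2) powr a \<le> (3 powr d / d * x powr (2*d)) powr a"
      using l a0 ln_pos2[of x] by (intro powr_mono2) auto
    also have "\<dots> = C * x powr (2*d*a)"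
    proof -
      have "(3 powr d / d * x powr (2*d)) powr a = (3 powr d / d) powr a * (x powr (2*d)) powr a"
        using d0 by (intro powr_mult)
      also have "(x powr (2*d)) powr a = x powr (2*d*a)" by (simp add: powr_powr)
      finally show ?thesis by (simp add: C_def)
    qed
    also have "2*d*a = (p-1)/2" using a0 by (simp add: d_def)
    finally have l2: "ln (x\<^sup>2+2) powr (-\<alpha>) \<le> C * x powr ((p-1)/2)" by (simp add: a_def)
    have "hf p \<alpha> x \<le> x powr (-p) * (C * x powr ((p-1)/2))"
      unfolding hf_def using l2 by (intro mult_left_mono) auto
    also have "\<dots> = C * (x powr (-p) * x powr ((p-1)/2))" by simp
    also have "x powr (-p) * x powr ((p-1)/2) = x powr (-p + (p-1)/2)" by (rule powr_add[symmetric])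
    also have "-p + (p-1)/2 = -((p+1)/2)" by (simp add: field_simps)
    finally show ?thesis .
  qed
  moreover have "C > 0" using d0 by (simp add: C_def)
  ultimately show ?thesis by blast
qed

lemma hf_lower:
  shows "\<exists>c>0. \<forall>x. 0 < x \<and> x \<le> 1 \<longrightarrow> hf p \<alpha> x \<ge> c * x powr (-p)"
proof -
  define c where "c = min (ln 2 powr (-\<alpha>)) (ln 3 powr (-\<alpha>))"
  have c0: "c > 0" by (simp add: c_def)
  have "hf p \<alpha> x \<ge> c * x powr (-p)" if x: "0 < x" "x \<le> 1" for x
  proof -
    have x2: "x\<^sup>2 \<le> 1" using x by (simp add: power_le_one)
    have l1: "ln 2 \<le> ln (x\<^sup>2+2)" using ln_le_cancel_iff[of 2 "x\<^sup>2+2"] by simp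
    have l2: "ln (x\<^sup>2+2) \<le> ln 3" using x2 ln_le_cancel_iff[of "x\<^sup>2+2" 3] by simp
    have "c \<le> ln (x\<^sup>2+2) powr (-\<alpha>)"
    proof (cases "-\<alpha> \<ge> 0")
      case True
      hence "ln 2 powr (-\<alpha>) \<le> ln (x\<^sup>2+2) powr (-\<alpha>)" using l1 by (intro powr_mono2) auto
      thus ?thesis by (simp add: c_def)
    next
      case False
      hence "ln 3 powr (-\<alpha>) \<le> ln (x\<^sup>2+2) powr (-\<alpha>)" using l2 ln_pos2[of x] by (intro powr_mono2') auto
      thus ?thesis by (simp add: c_def)
    qed
    from mult_right_mono[OF this, of "x powr -p"]
    show ?thesis unfolding hf_def by (simp add: mult.commute)
  qed
  thus ?thesis using c0 by blast
qed

lemma alg: fixes p q L A B x \<alpha> :: real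
  assumes p: "p - 1 \<noteq> 0" and "q \<noteq> 0" "L \<noteq> 0"
  shows "((1-p)*A*B + x*A*(((-\<alpha>)*(B/L))*(1/q*(2*x))))/(p-1) = -(A*B)*(1 + \<alpha>/(p-1)*(2*x\<^sup>2/(q*L)))"
proof -
  define R where "R = 2*x\<^sup>2/(q*L)"
  have 1: "x*A*(((-\<alpha>)*(B/L))*(1/q*(2*x))) = -(A*B*\<alpha>*R)"
    by (simp add: R_def power2_eq_square mult_ac)
  have 2: "(1-p)*A*B = -(A*B)*(p-1)" by (simp add: algebra_simps)
  have "((1-p)*A*B + x*A*(((-\<alpha>)*(B/L))*(1/q*(2*x))))/(p-1) = (-(A*B)*(p-1) - A*B*\<alpha>*R)/(p-1)"
    unfolding 1 2 by simp
  also have "\<dots> = -(A*B) - A*B*\<alpha>*R/(p-1)" using p by (simp add: diff_divide_distrib)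
  also have "\<dots> = -(A*B)*(1 + \<alpha>/(p-1)*R)" by (simp add: algebra_simps)
  finally show ?thesis by (simp add: R_def)
qed

lemma kappa_alg:
  fixes p \<alpha> s l :: real
  assumes p: "p > 1" and s: "s > 0" and l: "l > 0"
  shows "((p-1) * s * (2/(p-1) * l) powr \<alpha>) powr (-1/(p-1)) = kappa p \<alpha> * s powr (-1/(p-1)) * l powr (-\<alpha>/(p-1))"
proof -
  define e where "e = -1/(p-1)"
  define c where "c = 2/(p-1)"
  have c0: "c > 0" using p by (simp add: c_def)
  have p0: "p - 1 > 0" using p by simp
  have "((p-1) * s * (c * l) powr \<alpha>) powr e = ((p-1) * s) powr e * ((c * l) powr \<alpha>) powr e"
    using p0 s by (simp add: powr_mult)
  also have "((p-1) * s) powr e = (p-1) powr e * s powr e" using p0 s by (simp add: powr_mult)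
  also have "((c * l) powr \<alpha>) powr e = (c * l) powr (\<alpha> * e)" by (simp add: powr_powr)
  also have "(c * l) powr (\<alpha> * e) = c powr (\<alpha> * e) * l powr (\<alpha> * e)" using c0 l by (simp add: powr_mult)
  also have "\<alpha> * e = - (\<alpha> / (p-1))" by (simp add: e_def)
  also have "c powr (- (\<alpha> / (p-1))) = ((p-1)/2) powr (\<alpha> / (p-1))"
  proof -
    have "c powr (- (\<alpha> / (p-1))) = inverse (c powr (\<alpha> / (p-1)))" by (simp add: powr_minus)
    also have "c powr (\<alpha> / (p-1)) = 2 powr (\<alpha> / (p-1)) / (p-1) powr (\<alpha> / (p-1))"
      unfolding c_def using p0 by (simp add: powr_divide)
    also have "((p-1)/2) powr (\<alpha> / (p-1)) = (p-1) powr (\<alpha> / (p-1)) / 2 powr (\<alpha> / (p-1))"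
      using p0 by (simp add: powr_divide)
    ultimately show ?thesis by simp
  qed
  finally have "((p-1) * s * (c * l) powr \<alpha>) powr e =
      (p-1) powr e * s powr e * (((p-1)/2) powr (\<alpha> / (p-1)) * l powr (- (\<alpha> / (p-1))))" .
  also have "\<dots> = kappa p \<alpha> * s powr e * l powr (-\<alpha>/(p-1))"
    by (simp add: kappa_def e_def mult_ac)
  finally show ?thesis by (simp add: e_def c_def)
qed



context
  fixes p \<alpha> :: real and H :: "real \<Rightarrow> real"
  assumes p1: "p > 1" and HD: "\<And>x. x > 0 \<Longrightarrow> (H has_real_derivative hf p \<alpha> x) (at x)"
begin

lemma H_less: "0 < x \<Longrightarrow> x < y \<Longrightarrow> H x < H y"
proof (rule DERIV_pos_imp_increasing[of x y H])
  fix z assume "0 < x" "x \<le> z"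
  thus "\<exists>y. DERIV H z :> y \<and> y > 0" using HD[of z] hf_pos[of z] by auto
qed

lemma H_bdd: "\<exists>B. \<forall>x>0. H x \<le> B"
proof -
  obtain C where C0: "C > 0" and C: "\<And>x. x \<ge> 1 \<Longrightarrow> hf p \<alpha> x \<le> C * x powr (-((p+1)/2))"
    using hf_upper[OF p1, of \<alpha>] by blast
  define q where "q = (p+1)/2"
  have q1: "q > 1" using p1 by (simp add: q_def)
  define K where "K = C/(q-1)"
  define E where "E z = H z + K * z powr (1-q)" for z
  have "H x \<le> H 1 + C/(q-1)" if x: "x > 0" for x
  proof (cases "x \<ge> 1")
    case True
    have "E x \<le> E 1"
    proof (rule DERIV_nonpos_imp_nonincreasing[OF True])
      fix z assume z: "1 \<le> z" "z \<le> x"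
      have "DERIV E z :> hf p \<alpha> z + K * ((1-q) * z powr (1-q-1))"
        unfolding E_def using z by (intro DERIV_add DERIV_cmult HD has_real_derivative_powr) auto
      moreover have "hf p \<alpha> z + K * ((1-q) * z powr (1-q-1)) \<le> 0"
      proof -
        have "K * (1-q) = - C" using q1 unfolding K_def
          by (simp add: divide_simps algebra_simps)
        hence "K * ((1-q) * z powr (1-q-1)) = - C * z powr (-q)"
          by (simp add: mult.assoc[symmetric])
        moreover have "hf p \<alpha> z \<le> C * z powr (-q)" using C[of z] z by (simp add: q_def)
        ultimately show ?thesis by linarith
      qed
      ultimately show "\<exists>y. DERIV E z :> y \<and> y \<le> 0" by blast
    qed
    hence "H x + C/(q-1) * x powr (1-q) \<le> H 1 + C/(q-1)" by (simp add: E_def K_def)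
    moreover have "C/(q-1) * x powr (1-q) \<ge> 0" using C0 q1 by simp
    ultimately show ?thesis by linarith
  next
    case False
    hence "H x < H 1" using x H_less by auto
    moreover have "C/(q-1) \<ge> 0" using C0 q1 by simp
    ultimately show ?thesis by linarith
  qed
  thus ?thesis by blast
qed

lemma H_low: "\<exists>x>0. H x < y"
proof -
  obtain c where c0: "c > 0" and c: "\<And>x. 0 < x \<Longrightarrow> x \<le> 1 \<Longrightarrow> hf p \<alpha> x \<ge> c * x powr (-p)"
    using hf_lower[of p \<alpha>] by blast
  define K where "K = c/(p-1)"
  define E where "E z = H z + K * z powr (1-p)" for z
  have bound: "H x \<le> H 1 + c/(p-1) - c/(p-1) * x powr (1-p)" if x: "0 < x" "x \<le> 1" for x
  proof -
    have "E x \<le> E 1"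
    proof (rule DERIV_nonneg_imp_nondecreasing[OF x(2)])
      fix z assume z: "x \<le> z" "z \<le> 1"
      have "DERIV E z :> hf p \<alpha> z + K * ((1-p) * z powr (1-p-1))"
        unfolding E_def using z x by (intro DERIV_add DERIV_cmult HD has_real_derivative_powr) auto
      moreover have "hf p \<alpha> z + K * ((1-p) * z powr (1-p-1)) \<ge> 0"
      proof -
        have "K * (1-p) = - c" using p1 unfolding K_def
          by (simp add: divide_simps algebra_simps)
        hence "K * ((1-p) * z powr (1-p-1)) = - c * z powr (-p)"
          by (simp add: mult.assoc[symmetric])
        moreover have "hf p \<alpha> z \<ge> c * z powr (-p)" using c[of z] z x by simp
        ultimately show ?thesis by linarith
      qed
      ultimately show "\<exists>y. DERIV E z :> y \<and> y \<ge> 0" by blast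
    qed
    thus ?thesis by (simp add: E_def K_def)
  qed
  have "filterlim (\<lambda>x::real. x powr (1-p)) at_top (at_right 0)" using p1 by real_asymp
  hence "eventually (\<lambda>x. x powr (1-p) > (H 1 + c/(p-1) - y) * (p-1) / c + 1) (at_right 0)"
    by (simp add: filterlim_at_top_dense)
  moreover have "eventually (\<lambda>x. x \<in> {0<..<1}) (at_right (0::real))"
    by (rule eventually_at_right_real) simp
  ultimately have "eventually (\<lambda>x. x \<in> {0<..<1} \<and> x powr (1-p) > (H 1 + c/(p-1) - y) * (p-1) / c + 1) (at_right 0)"
    by eventually_elim auto
  then obtain x where x: "x \<in> {0<..<1}" and xp: "x powr (1-p) > (H 1 + c/(p-1) - y) * (p-1) / c + 1"
    using eventually_happens'[OF trivial_limit_at_right_real] by blast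
  have "(H 1 + c/(p-1) - y) * (p-1) / c < x powr (1-p)" using xp by linarith
  hence "H 1 + c/(p-1) - y < c/(p-1) * x powr (1-p)"
    using c0 p1 by (simp add: field_simps)
  hence "H x < y" using bound[of x] x by auto
  thus ?thesis using x by auto
qed

definition LL where "LL = Sup (H ` {0<..})"

lemma bddH: "bdd_above (H ` {0<..})"
  using H_bdd by (auto simp: bdd_above_def)

lemma H_lt_L: assumes x: "x > 0" shows "H x < LL"
proof -
  have "H x < H (x+1)" using x by (intro H_less) auto
  also have "H (x+1) \<le> LL" unfolding LL_def using x by (intro cSup_upper bddH) auto
  finally show ?thesis .
qed

lemma H_lim: "(H \<longlongrightarrow> LL) at_top"
proof (rule order_tendstoI)
  fix a assume "a > LL"
  thus "eventually (\<lambda>x. H x < a) at_top"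
    by (intro eventually_mono[OF eventually_gt_at_top[of 0]]) (use H_lt_L in \<open>fastforce\<close>)
next
  fix a assume a: "a < LL"
  have ne: "H ` {0<..} \<noteq> {}" by auto
  have "\<exists>y\<in>H ` {0<..}. a < y" using less_cSup_iff[OF ne bddH, of a] a unfolding LL_def by auto
  then obtain x0 where x0: "x0 > 0" "a < H x0" by auto
  show "eventually (\<lambda>x. a < H x) at_top"
    using eventually_gt_at_top[of x0]
    by (rule eventually_mono) (rule less_trans[OF x0(2) H_less[OF x0(1)]])
qed

definition GG where "GG x = LL - H x"

lemma G_pos: "x > 0 \<Longrightarrow> GG x > 0" using H_lt_L by (simp add: GG_def)
lemma G_less: "0 < x \<Longrightarrow> x < y \<Longrightarrow> GG y < GG x" using H_less by (simp add: GG_def)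
lemma G_inj: "0 < x \<Longrightarrow> 0 < y \<Longrightarrow> GG x = GG y \<Longrightarrow> x = y"
proof -
  assume a: "0 < x" "0 < y" "GG x = GG y"
  show "x = y"
  proof (rule ccontr)
    assume "x \<noteq> y"
    hence "x < y \<or> y < x" by linarith
    thus False using G_less[of x y] G_less[of y x] a by auto
  qed
qed
lemma G_D: "x > 0 \<Longrightarrow> (GG has_real_derivative - hf p \<alpha> x) (at x)"
  unfolding GG_def by (auto intro!: derivative_eq_intros HD)
lemma G_lim: "(GG \<longlongrightarrow> 0) at_top"
  unfolding GG_def using tendsto_diff[OF tendsto_const H_lim, of LL] by simp
lemma G_cont: "continuous_on {0<..} GG"
  by (intro continuous_at_imp_continuous_on ballI DERIV_isCont[OF G_D]) auto

lemma G_surj: assumes s: "s > 0" shows "\<exists>x>0. GG x = s"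
proof -
  have "eventually (\<lambda>x. GG x < s \<and> x > 0) at_top"
    using order_tendstoD(2)[OF G_lim s] eventually_gt_at_top[of 0] by eventually_elim auto
  then obtain x2 where x2: "GG x2 < s" "x2 > 0" unfolding eventually_at_top_linorder by blast
  obtain x1 where x1: "x1 > 0" "H x1 < LL - s" using H_low by blast
  have g1: "GG x1 > s" using x1 by (simp add: GG_def)
  have "x1 < x2"
  proof (rule ccontr)
    assume "\<not> x1 < x2"
    hence "x2 < x1 \<or> x2 = x1" by linarith
    thus False using G_less[of x2 x1] x1 x2 g1 by auto
  qed
  have "\<exists>x. x1 \<le> x \<and> x \<le> x2 \<and> GG x = s"
  proof (rule IVT2')
    show "continuous_on {x1..x2} GG" by (rule continuous_on_subset[OF G_cont]) (use x1 in auto)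
    show "GG x2 \<le> s" using x2 by simp
    show "s \<le> GG x1" using g1 by simp
    show "x1 \<le> x2" using \<open>x1 < x2\<close> by simp
  qed
  then obtain x where "x1 \<le> x" "GG x = s" by blast
  thus ?thesis using x1 by (intro exI[of _ x]) auto
qed

lemma sol_char:
  assumes sol: "blowup_solution p \<alpha> T \<phi>" and t: "t < T"
  shows "GG (\<phi> t) = T - t"
proof -
  define K where "K = (\<lambda>t. GG (\<phi> t) + t)"
  have A: "\<forall>t<T. \<phi> t > 0 \<and>
        (\<phi> has_real_derivative ((\<phi> t) powr p * (ln ((\<phi> t)\<^sup>2 + 2)) powr \<alpha>)) (at t)"
    and lim: "filterlim \<phi> at_top (at_left T)"
    using sol unfolding blowup_solution_def by (rule conjunct1, rule conjunct2)
  have pos: "\<And>t. t < T \<Longrightarrow> \<phi> t > 0" using A by simp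
  have D: "\<And>t. t < T \<Longrightarrow> (\<phi> has_real_derivative ((\<phi> t) powr p * (ln ((\<phi> t)\<^sup>2 + 2)) powr \<alpha>)) (at t)"
    using A by simp
  have KD: "DERIV K t :> 0" if t: "t < T" for t
  proof -
    define x where "x = \<phi> t"
    define L where "L = ln (x\<^sup>2 + 2)"
    have x0: "x > 0" using pos[OF t] by (simp add: x_def)
    have L0: "L > 0" using ln_pos2[of x] by (simp add: L_def)
    have a: "x powr (-p) * x powr p = 1" using x0 by (simp add: powr_minus)
    have b: "L powr (-\<alpha>) * L powr \<alpha> = 1" using L0 by (simp add: powr_minus)
    have "hf p \<alpha> x * (x powr p * L powr \<alpha>) = (x powr (-p) * x powr p) * (L powr (-\<alpha>) * L powr \<alpha>)"
      by (simp add: hf_def L_def mult_ac)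
    hence e: "- hf p \<alpha> x * (x powr p * L powr \<alpha>) + 1 = 0" using a b by simp
    have "DERIV K t :> - hf p \<alpha> (\<phi> t) * ((\<phi> t) powr p * (ln ((\<phi> t)\<^sup>2 + 2)) powr \<alpha>) + 1"
      unfolding K_def by (rule DERIV_add[OF DERIV_chain2[OF G_D[OF pos[OF t]] D[OF t]] DERIV_ident])
    thus ?thesis using e by (simp add: x_def L_def)
  qed
  have const: "K s = K (T - 1)" if s: "s < T" for s
  proof (rule DERIV_isconst3[of "min s (T-1) - 1" T s "T-1" K])
    fix x assume "x \<in> {min s (T - 1) - 1<..<T}"
    thus "DERIV K x :> 0" by (intro KD) simp
  qed (use s in simp_all)
  have l1: "((\<lambda>t. GG (\<phi> t)) \<longlongrightarrow> 0) (at_left T)" by (rule filterlim_compose[OF G_lim lim])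
  have l2: "((\<lambda>t. t) \<longlongrightarrow> T) (at_left T)" by (rule tendsto_ident_at)
  have "(K \<longlongrightarrow> 0 + T) (at_left T)"
    unfolding K_def by (rule tendsto_add[OF l1 l2])
  moreover have "eventually (\<lambda>s. K s = K (T-1)) (at_left T)"
  proof -
    have ev: "eventually (\<lambda>x. x \<in> {T-1<..<T}) (at_left T)" by (rule eventually_at_left_real) simp
    show ?thesis using ev by (rule eventually_mono) (rule const, simp)
  qed
  ultimately have "((\<lambda>_. K (T-1)) \<longlongrightarrow> 0 + T) (at_left T)"
    by (rule Lim_transform_eventually)
  hence "K (T-1) = 0 + T" by (rule tendsto_unique[OF trivial_limit_at_left_real tendsto_const])
  thus ?thesis using const[OF t] unfolding K_def by simp
qed

lemma exists_sol: "\<exists>\<psi>. blowup_solution p \<alpha> T \<psi>"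
proof -
  define \<psi> where "\<psi> t = (THE x. x > 0 \<and> GG x = T - t)" for t
  have ex: "\<psi> t > 0 \<and> GG (\<psi> t) = T - t" if t: "t < T" for t
  proof -
    obtain x where x: "x > 0" "GG x = T - t" using G_surj[of "T - t"] t by auto
    have "\<psi> t = x" unfolding \<psi>_def
    proof (rule the_equality)
      show "x > 0 \<and> GG x = T - t" using x by simp
      fix y assume "y > 0 \<and> GG y = T - t"
      thus "y = x" using G_inj[of y x] x by simp
    qed
    thus ?thesis using x by simp
  qed
  have inv: "\<psi> (T - GG z) = z" if z: "z > 0" for z
    unfolding \<psi>_def
  proof (rule the_equality)
    show "z > 0 \<and> GG z = T - (T - GG z)" using z by simp
    fix y assume "y > 0 \<and> GG y = T - (T - GG z)"
    thus "y = z" using G_inj[of y z] z by simp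
  qed
  have D: "(\<psi> has_real_derivative ((\<psi> t) powr p * (ln ((\<psi> t)\<^sup>2 + 2)) powr \<alpha>)) (at t)"
    if t: "t < T" for t
  proof -
    define x where "x = \<psi> t"
    have x0: "x > 0" and gx: "GG x = T - t" using ex[OF t] by (simp_all add: x_def)
    have dF: "DERIV (\<lambda>z. T - GG z) x :> 0 - (- hf p \<alpha> x)"
      by (rule DERIV_diff[OF DERIV_const G_D[OF x0]])
    have cF: "continuous_on {0<..} (\<lambda>z. T - GG z)"
      by (rule continuous_on_diff[OF continuous_on_const G_cont])
    have "DERIV \<psi> (T - GG x) :> inverse (0 - (- hf p \<alpha> x))"
      by (rule my_inverse_strong[OF dF _ open_greaterThan _ cF]) (use x0 hf_pos[OF x0, of p \<alpha>] inv in auto)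
    moreover have "T - GG x = t" using gx by simp
    moreover have "inverse (0 - (- hf p \<alpha> x)) = x powr p * (ln (x\<^sup>2 + 2)) powr \<alpha>"
      by (simp add: hf_def powr_minus)
    ultimately show ?thesis by (simp add: x_def)
  qed
  have lim: "filterlim \<psi> at_top (at_left T)"
    unfolding filterlim_at_top
  proof
    fix Z :: real
    define M where "M = max Z 1"
    have M0: "M > 0" by (simp add: M_def)
    have gM: "GG M > 0" by (rule G_pos[OF M0])
    have ev: "eventually (\<lambda>t. t \<in> {T - GG M<..<T}) (at_left T)"
      by (rule eventually_at_left_real) (use gM in simp)
    show "eventually (\<lambda>t. Z \<le> \<psi> t) (at_left T)"
      using ev
    proof (rule eventually_mono)
      fix t assume t: "t \<in> {T - GG M<..<T}"
      have e: "\<psi> t > 0" "GG (\<psi> t) = T - t" using ex[of t] t by simp_all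
      have "\<not> \<psi> t < M"
      proof
        assume "\<psi> t < M"
        hence "GG M < GG (\<psi> t)" by (intro G_less e(1))
        thus False using e t by simp
      qed
      thus "Z \<le> \<psi> t" by (simp add: M_def)
    qed
  qed
  have "blowup_solution p \<alpha> T \<psi>"
    unfolding blowup_solution_def using ex D lim by simp
  thus ?thesis by blast
qed

lemma uniq_sol:
  assumes "blowup_solution p \<alpha> T \<psi>1" "blowup_solution p \<alpha> T \<psi>2" "t < T"
  shows "\<psi>1 t = \<psi>2 t"
proof -
  have "\<psi>1 t > 0" "\<psi>2 t > 0" using assms unfolding blowup_solution_def by simp_all
  moreover have "GG (\<psi>1 t) = GG (\<psi>2 t)" using sol_char[OF assms(1,3)] sol_char[OF assms(2,3)] by simp
  ultimately show ?thesis by (rule G_inj)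
qed

definition gg where "gg x = x powr (1-p) * ln (x\<^sup>2+2) powr (-\<alpha>) / (p-1)"

lemma gg_eq: assumes x: "x > 0" shows "gg x = x * hf p \<alpha> x / (p-1)"
proof -
  have "x powr (1 + (-p)) = x powr 1 * x powr (-p)" by (rule powr_add)
  hence "x powr (1-p) = x * x powr (-p)" using x by simp
  thus ?thesis by (simp add: gg_def hf_def mult.assoc)
qed

lemma gg_pos: "x > 0 \<Longrightarrow> gg x > 0"
  using gg_eq[of x] hf_pos[of x p \<alpha>] p1 by simp

lemma gg_lim: "(gg \<longlongrightarrow> 0) at_top"
proof -
  obtain C where C0: "C > 0" and C: "\<And>x. x \<ge> 1 \<Longrightarrow> hf p \<alpha> x \<le> C * x powr (-((p+1)/2))"
    using hf_upper[OF p1, of \<alpha>] by blast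
  have lim: "((\<lambda>x::real. C / (p-1) * x powr (1 - (p+1)/2)) \<longlongrightarrow> 0) at_top"
    using p1 by real_asymp
  have ev1: "eventually (\<lambda>x. 0 \<le> gg x) at_top"
    using eventually_gt_at_top[of 0] by (rule eventually_mono) (simp add: gg_pos less_imp_le)
  have ev2: "eventually (\<lambda>x. gg x \<le> C / (p-1) * x powr (1 - (p+1)/2)) at_top"
    using eventually_ge_at_top[of 1]
  proof (rule eventually_mono)
    fix x :: real assume x: "1 \<le> x"
    have "gg x = x * hf p \<alpha> x / (p-1)" using x by (intro gg_eq) simp
    also have "\<dots> \<le> x * (C * x powr (-((p+1)/2))) / (p-1)"
      using C[OF x] x p1 by (intro divide_right_mono mult_left_mono) auto
    also have "x * (C * x powr (-((p+1)/2))) = C * (x * x powr (-((p+1)/2)))" by simp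
    also have "x * x powr (-((p+1)/2)) = x powr (1 - (p+1)/2)"
      using powr_add[of x 1 "-((p+1)/2)"] x by simp
    finally show "gg x \<le> C / (p-1) * x powr (1 - (p+1)/2)" by simp
  qed
  show ?thesis by (rule tendsto_sandwich[OF ev1 ev2 tendsto_const lim])
qed

definition rr :: "real \<Rightarrow> real" where "rr x = 2 * x\<^sup>2 / ((x\<^sup>2 + 2) * ln (x\<^sup>2 + 2))"

lemma rr_lim: "(rr \<longlongrightarrow> 0) at_top"
  unfolding rr_def by real_asymp

lemma gg_D: assumes x: "x > 0"
  shows "DERIV gg x :> - hf p \<alpha> x * (1 + \<alpha> / (p-1) * rr x)"
proof -
  define L where "L = ln (x\<^sup>2 + 2)"
  have L0: "L > 0" using ln_pos2[of x] by (simp add: L_def)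
  have d1: "DERIV (\<lambda>x. x powr (1-p)) x :> (1-p) * x powr (1-p-1)"
    by (rule has_real_derivative_powr[OF x])
  have dL: "DERIV (\<lambda>x. ln (x\<^sup>2 + 2)) x :> 1 / (x\<^sup>2 + 2) * (2 * x)"
  proof -
    have xx: "0 < x * x + 2" using sq2_pos(1)[of x] by (simp add: power2_eq_square)
    show ?thesis by (auto intro!: derivative_eq_intros simp: power2_eq_square xx)
  qed
  have d2: "DERIV (\<lambda>x. ln (x\<^sup>2 + 2) powr (-\<alpha>)) x :> ((-\<alpha>) * L powr (-\<alpha>-1)) * (1 / (x\<^sup>2 + 2) * (2 * x))"
    using DERIV_chain2[OF has_real_derivative_powr[OF ln_pos2[of x], of "-\<alpha>"] dL] by (simp add: L_def)
  have ggf: "gg = (\<lambda>x. x powr (1-p) * ln (x\<^sup>2+2) powr (-\<alpha>) / (p-1))"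
    by (rule ext) (simp add: gg_def)
  have "DERIV gg x :> ((1-p) * x powr (1-p-1) * ln (x\<^sup>2+2) powr (-\<alpha>) +
           ((-\<alpha>) * L powr (-\<alpha>-1)) * (1 / (x\<^sup>2 + 2) * (2 * x)) * x powr (1-p)) / (p-1)"
    unfolding ggf by (rule DERIV_cdivide[OF DERIV_mult[OF d1 d2]])
  hence "DERIV gg x :> ((1-p) * x powr (1-p-1) * L powr (-\<alpha>) +
           x powr (1-p) * (((-\<alpha>) * L powr (-\<alpha>-1)) * (1 / (x\<^sup>2 + 2) * (2 * x)))) / (p-1)"
    by (simp add: L_def mult.commute)
  moreover have "((1-p) * x powr (1-p-1) * L powr (-\<alpha>) +
           x powr (1-p) * (((-\<alpha>) * L powr (-\<alpha>-1)) * (1 / (x\<^sup>2 + 2) * (2 * x)))) / (p-1)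
         = - hf p \<alpha> x * (1 + \<alpha> / (p-1) * rr x)"
  proof -
    define A where "A = x powr (-p)"
    define B where "B = L powr (-\<alpha>)"
    have e1: "x powr (1-p-1) = A" by (simp add: A_def)
    have "x powr (1 + (-p)) = x powr 1 * x powr (-p)" by (rule powr_add)
    hence e2: "x powr (1-p) = x * A" using x by (simp add: A_def)
    have e3: "L powr (-\<alpha>-1) = B / L"
      using L0 by (simp add: B_def powr_diff)
    have hfe: "hf p \<alpha> x = A * B" by (simp add: hf_def A_def B_def L_def)
    have rre: "rr x = 2 * x\<^sup>2 / ((x\<^sup>2 + 2) * L)" by (simp add: rr_def L_def)
    have p0: "p - 1 \<noteq> 0" using p1 by simp
    have q0: "x\<^sup>2 + 2 \<noteq> 0" by simp
    have e4: "L powr (-\<alpha>) = B" by (simp add: B_def)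
    show ?thesis unfolding e1 e2 e3 e4 hfe rre using L0
      by (intro alg p0 q0) simp
  qed
  ultimately show ?thesis by simp
qed

lemma G_equiv: "GG \<sim>[at_top] gg"
proof (rule asymp_equivI')
  have ev_r: "eventually (\<lambda>x. 1 + \<alpha> / (p-1) * rr x > 0) at_top"
  proof -
    have "((\<lambda>x. 1 + \<alpha> / (p-1) * rr x) \<longlongrightarrow> 1 + \<alpha> / (p-1) * 0) at_top"
      by (intro tendsto_intros rr_lim)
    thus ?thesis by (rule order_tendstoD) simp
  qed
  have lim: "((\<lambda>x. (- hf p \<alpha> x) / (- hf p \<alpha> x * (1 + \<alpha> / (p-1) * rr x))) \<longlongrightarrow> 1) at_top"
  proof -
    have "((\<lambda>x. 1 / (1 + \<alpha> / (p-1) * rr x)) \<longlongrightarrow> 1 / (1 + \<alpha> / (p-1) * 0)) at_top"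
      by (intro tendsto_intros rr_lim) simp
    moreover have "eventually (\<lambda>x. 1 / (1 + \<alpha> / (p-1) * rr x) =
        (- hf p \<alpha> x) / (- hf p \<alpha> x * (1 + \<alpha> / (p-1) * rr x))) at_top"
      using eventually_gt_at_top[of 0]
    proof (rule eventually_mono)
      fix x :: real assume "x > 0"
      hence "hf p \<alpha> x \<noteq> 0" using hf_pos[of x p \<alpha>] by simp
      thus "1 / (1 + \<alpha> / (p-1) * rr x) = (- hf p \<alpha> x) / (- hf p \<alpha> x * (1 + \<alpha> / (p-1) * rr x))"
        by simp
    qed
    ultimately show ?thesis by (simp add: Lim_transform_eventually)
  qed
  show "((\<lambda>x. GG x / gg x) \<longlongrightarrow> 1) at_top"
  proof (rule lhopital_at_top_0[OF G_lim gg_lim _ _ _ _ lim])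
    show "eventually (\<lambda>x. gg x \<noteq> 0) at_top"
      using eventually_gt_at_top[of 0] by (rule eventually_mono) (simp add: gg_pos less_imp_neq[symmetric])
    show "eventually (\<lambda>x. - hf p \<alpha> x * (1 + \<alpha> / (p-1) * rr x) \<noteq> 0) at_top"
      using eventually_conj[OF eventually_gt_at_top[of 0] ev_r]
    proof (rule eventually_mono)
      fix x :: real assume "0 < x \<and> 0 < 1 + \<alpha> / (p-1) * rr x"
      thus "- hf p \<alpha> x * (1 + \<alpha> / (p-1) * rr x) \<noteq> 0" using hf_pos[of x p \<alpha>] by simp
    qed
    show "eventually (\<lambda>x. DERIV GG x :> - hf p \<alpha> x) at_top"
      using eventually_gt_at_top[of 0] by (rule eventually_mono) (rule G_D)
    show "eventually (\<lambda>x. DERIV gg x :> - hf p \<alpha> x * (1 + \<alpha> / (p-1) * rr x)) at_top"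
      using eventually_gt_at_top[of 0] by (rule eventually_mono) (rule gg_D)
  qed
qed

lemma ln_gg: assumes y: "y > 0"
  shows "ln (gg y) = (1-p) * ln y - \<alpha> * ln (ln (y\<^sup>2+2)) - ln (p-1)"
proof -
  have L0: "ln (y\<^sup>2+2) > 0" by (rule ln_pos2)
  have a: "y powr (1-p) > 0" "ln (y\<^sup>2+2) powr (-\<alpha>) > 0" "p - 1 > 0" using y L0 p1 by auto
  have "ln (gg y) = ln (y powr (1-p) * ln (y\<^sup>2+2) powr (-\<alpha>)) - ln (p-1)"
    unfolding gg_def using a by (simp add: ln_div)
  also have "ln (y powr (1-p) * ln (y\<^sup>2+2) powr (-\<alpha>)) = ln (y powr (1-p)) + ln (ln (y\<^sup>2+2) powr (-\<alpha>))"
    using a by (simp add: ln_mult)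
  finally show ?thesis by simp
qed

lemma gg_inv: assumes y: "y > 0"
  shows "((p-1) * gg y * ln (y\<^sup>2+2) powr \<alpha>) powr (-1/(p-1)) = y"
proof -
  have L0: "ln (y\<^sup>2+2) > 0" by (rule ln_pos2)
  have b: "ln (y\<^sup>2+2) powr (-\<alpha>) * ln (y\<^sup>2+2) powr \<alpha> = 1" using L0 by (simp add: powr_minus)
  have "(p-1) * gg y * ln (y\<^sup>2+2) powr \<alpha> = y powr (1-p) * (ln (y\<^sup>2+2) powr (-\<alpha>) * ln (y\<^sup>2+2) powr \<alpha>)"
    using p1 by (simp add: gg_def)
  also have "\<dots> = y powr (1-p)" using b by simp
  finally have "((p-1) * gg y * ln (y\<^sup>2+2) powr \<alpha>) powr (-1/(p-1)) = (y powr (1-p)) powr (-1/(p-1))"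
    by simp
  also have "\<dots> = y powr ((1-p) * (-1/(p-1)))" by (simp add: powr_powr)
  also have "(1-p) * (-1/(p-1)) = 1" using p1 by (simp add: divide_simps)
  finally show ?thesis using y by simp
qed

lemma asymp_sol:
  assumes sol: "blowup_solution p \<alpha> T \<phi>"
  shows "\<phi> \<sim>[at_left T] (\<lambda>t. kappa p \<alpha> * (T - t) powr (-1 / (p - 1)) * \<bar>ln (T - t)\<bar> powr (-\<alpha> / (p - 1)))"
proof -
  have A: "\<forall>t<T. \<phi> t > 0 \<and>
        (\<phi> has_real_derivative ((\<phi> t) powr p * (ln ((\<phi> t)\<^sup>2 + 2)) powr \<alpha>)) (at t)"
    and lim: "filterlim \<phi> at_top (at_left T)"
    using sol unfolding blowup_solution_def by (rule conjunct1, rule conjunct2)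
  have pos: "\<And>t. t < T \<Longrightarrow> \<phi> t > 0" using A by simp
  have ev0: "eventually (\<lambda>t. t \<in> {T - 1/2<..<T}) (at_left T)"
    by (rule eventually_at_left_real) simp
  have evphi: "eventually (\<lambda>t. \<phi> t > 1) (at_left T)"
    using lim by (simp add: filterlim_at_top_dense)
  have ev: "eventually (\<lambda>t. t \<in> {T - 1/2<..<T} \<and> \<phi> t > 1) (at_left T)"
    by (rule eventually_conj[OF ev0 evphi])
  have char: "eventually (\<lambda>t. GG (\<phi> t) = T - t) (at_left T)"
    using ev0 by (rule eventually_mono) (rule sol_char[OF sol], simp)
  have e0: "(\<lambda>t. gg (\<phi> t)) \<sim>[at_left T] (\<lambda>t. GG (\<phi> t))"
    using asymp_equiv_compose'[OF G_equiv lim] by (subst asymp_equiv_sym)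
  have e1: "(\<lambda>t. gg (\<phi> t)) \<sim>[at_left T] (\<lambda>t. T - t)"
    by (rule asymp_equiv_transfer[OF e0 _ char]) simp
  have R: "((\<lambda>t. gg (\<phi> t) / (T - t)) \<longlongrightarrow> 1) (at_left T)"
  proof (rule asymp_equivD_strong[OF e1])
    show "eventually (\<lambda>t. gg (\<phi> t) \<noteq> 0 \<or> T - t \<noteq> 0) (at_left T)"
      using ev0 by (rule eventually_mono) simp
  qed
  have lnR: "((\<lambda>t. ln (gg (\<phi> t) / (T - t))) \<longlongrightarrow> 0) (at_left T)"
    using tendsto_ln[OF R] by simp
  have a1: "((\<lambda>x::real. ln (ln (x\<^sup>2+2)) / ln x) \<longlongrightarrow> 0) at_top" by real_asymp
  have a2: "((\<lambda>x::real. ln (x\<^sup>2+2) / ln x) \<longlongrightarrow> 2) at_top" by real_asymp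
  have a3: "((\<lambda>x::real. 1 / ln x) \<longlongrightarrow> 0) at_top" by real_asymp
  have A1: "((\<lambda>t. ln (ln ((\<phi> t)\<^sup>2+2)) / ln (\<phi> t)) \<longlongrightarrow> 0) (at_left T)"
    by (rule filterlim_compose[OF a1 lim])
  have A2: "((\<lambda>t. ln ((\<phi> t)\<^sup>2+2) / ln (\<phi> t)) \<longlongrightarrow> 2) (at_left T)"
    by (rule filterlim_compose[OF a2 lim])
  have A3: "((\<lambda>t. 1 / ln (\<phi> t)) \<longlongrightarrow> 0) (at_left T)"
    by (rule filterlim_compose[OF a3 lim])
  define Q where "Q t = (1-p) - \<alpha> * (ln (ln ((\<phi> t)\<^sup>2+2)) / ln (\<phi> t)) - ln (p-1) * (1 / ln (\<phi> t))
                  - ln (gg (\<phi> t) / (T - t)) * (1 / ln (\<phi> t))" for t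
  have Qlim: "(Q \<longlongrightarrow> (1-p) - \<alpha> * 0 - ln (p-1) * 0 - 0 * 0) (at_left T)"
    unfolding Q_def by (intro tendsto_intros A1 A3 lnR)
  have Qeq: "eventually (\<lambda>t. ln (T - t) / ln (\<phi> t) = Q t) (at_left T)"
    using ev
  proof (rule eventually_mono)
    fix t assume t: "t \<in> {T - 1/2<..<T} \<and> \<phi> t > 1"
    have y0: "\<phi> t > 0" and l0: "ln (\<phi> t) > 0" using t by auto
    have s0: "T - t > 0" using t by simp
    have g0: "gg (\<phi> t) > 0" using gg_pos[OF y0] .
    have "ln (gg (\<phi> t) / (T - t)) = ln (gg (\<phi> t)) - ln (T - t)" using g0 s0 by (simp add: ln_div)
    hence "ln (T - t) = ln (gg (\<phi> t)) - ln (gg (\<phi> t) / (T - t))" by simp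
    also have "ln (gg (\<phi> t)) = (1-p) * ln (\<phi> t) - \<alpha> * ln (ln ((\<phi> t)\<^sup>2+2)) - ln (p-1)"
      by (rule ln_gg[OF y0])
    finally have "ln (T - t) = (1-p) * ln (\<phi> t) - \<alpha> * ln (ln ((\<phi> t)\<^sup>2+2)) - ln (p-1)
                   - ln (gg (\<phi> t) / (T - t))" .
    thus "ln (T - t) / ln (\<phi> t) = Q t" unfolding Q_def using l0
      by (simp add: diff_divide_distrib)
  qed
  have Q2: "((\<lambda>t. ln (T - t) / ln (\<phi> t)) \<longlongrightarrow> 1 - p) (at_left T)"
    using Lim_transform_eventually[OF Qlim] Qeq by (simp add: eq_commute)
  define c where "c = 2 / (p-1)"
  have c0: "c > 0" using p1 by (simp add: c_def)
  have eL: "(\<lambda>t. ln ((\<phi> t)\<^sup>2+2)) \<sim>[at_left T] (\<lambda>t. c * \<bar>ln (T - t)\<bar>)"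
  proof (rule asymp_equivI')
    have "((\<lambda>t. (ln ((\<phi> t)\<^sup>2+2) / ln (\<phi> t)) / (c * (- (ln (T - t) / ln (\<phi> t)))))
           \<longlongrightarrow> 2 / (c * (- (1 - p)))) (at_left T)"
      using p1 c0 by (intro tendsto_intros A2 Q2) simp
    moreover have "2 / (c * (- (1 - p))) = 1" using p1 by (simp add: c_def)
    ultimately have lim1: "((\<lambda>t. (ln ((\<phi> t)\<^sup>2+2) / ln (\<phi> t)) / (c * (- (ln (T - t) / ln (\<phi> t)))))
           \<longlongrightarrow> 1) (at_left T)" by simp
    have "eventually (\<lambda>t. (ln ((\<phi> t)\<^sup>2+2) / ln (\<phi> t)) / (c * (- (ln (T - t) / ln (\<phi> t)))) =
              ln ((\<phi> t)\<^sup>2+2) / (c * \<bar>ln (T - t)\<bar>)) (at_left T)"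
      using ev
    proof (rule eventually_mono)
      fix t assume t: "t \<in> {T - 1/2<..<T} \<and> \<phi> t > 1"
      have l0: "ln (\<phi> t) > 0" using t by auto
      have "ln (T - t) < 0" using t by simp
      hence ab: "\<bar>ln (T - t)\<bar> = - ln (T - t)" by simp
      show "(ln ((\<phi> t)\<^sup>2+2) / ln (\<phi> t)) / (c * (- (ln (T - t) / ln (\<phi> t)))) =
              ln ((\<phi> t)\<^sup>2+2) / (c * \<bar>ln (T - t)\<bar>)"
        unfolding ab using l0 by (simp add: divide_simps)
    qed
    thus "((\<lambda>t. ln ((\<phi> t)\<^sup>2+2) / (c * \<bar>ln (T - t)\<bar>)) \<longlongrightarrow> 1) (at_left T)"
      by (rule Lim_transform_eventually[OF lim1])
  qed
  have eP: "(\<lambda>t. ln ((\<phi> t)\<^sup>2+2) powr \<alpha>) \<sim>[at_left T] (\<lambda>t. (c * \<bar>ln (T - t)\<bar>) powr \<alpha>)"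
  proof (rule asymp_equiv_powr_real[OF eL])
    show "eventually (\<lambda>t. 0 \<le> ln ((\<phi> t)\<^sup>2+2)) (at_left T)"
      by (intro always_eventually allI less_imp_le[OF ln_pos2])
    show "eventually (\<lambda>t. 0 \<le> c * \<bar>ln (T - t)\<bar>) (at_left T)"
      using c0 by (intro always_eventually allI) simp
  qed
  have eM: "(\<lambda>t. (p-1) * gg (\<phi> t) * ln ((\<phi> t)\<^sup>2+2) powr \<alpha>) \<sim>[at_left T]
            (\<lambda>t. (p-1) * (T - t) * (c * \<bar>ln (T - t)\<bar>) powr \<alpha>)"
    by (intro asymp_equiv_mult asymp_equiv_refl e1 eP)
  have eQ: "(\<lambda>t. ((p-1) * gg (\<phi> t) * ln ((\<phi> t)\<^sup>2+2) powr \<alpha>) powr (-1/(p-1))) \<sim>[at_left T]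
            (\<lambda>t. ((p-1) * (T - t) * (c * \<bar>ln (T - t)\<bar>) powr \<alpha>) powr (-1/(p-1)))"
  proof (rule asymp_equiv_powr_real[OF eM])
    show "eventually (\<lambda>t. 0 \<le> (p-1) * gg (\<phi> t) * ln ((\<phi> t)\<^sup>2+2) powr \<alpha>) (at_left T)"
      using ev
    proof (rule eventually_mono)
      fix t assume t: "t \<in> {T - 1/2<..<T} \<and> \<phi> t > 1"
      hence "gg (\<phi> t) > 0" by (intro gg_pos) auto
      thus "0 \<le> (p-1) * gg (\<phi> t) * ln ((\<phi> t)\<^sup>2+2) powr \<alpha>" using p1 by simp
    qed
    show "eventually (\<lambda>t. 0 \<le> (p-1) * (T - t) * (c * \<bar>ln (T - t)\<bar>) powr \<alpha>) (at_left T)"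
      using ev0 by (rule eventually_mono) (use p1 in simp)
  qed
  show ?thesis
  proof (rule asymp_equiv_transfer[OF eQ])
    show "eventually (\<lambda>t. ((p-1) * gg (\<phi> t) * ln ((\<phi> t)\<^sup>2+2) powr \<alpha>) powr (-1/(p-1)) = \<phi> t) (at_left T)"
      using ev by (rule eventually_mono) (rule gg_inv, simp)
    show "eventually (\<lambda>t. ((p-1) * (T - t) * (c * \<bar>ln (T - t)\<bar>) powr \<alpha>) powr (-1/(p-1)) =
        kappa p \<alpha> * (T - t) powr (-1 / (p - 1)) * \<bar>ln (T - t)\<bar> powr (-\<alpha> / (p - 1))) (at_left T)"
      using ev0
    proof (rule eventually_mono)
      fix t assume t: "t \<in> {T - 1/2<..<T}"
      have "ln (T - t) < 0" using t by simp
      hence l: "\<bar>ln (T - t)\<bar> > 0" by simp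
      have s: "T - t > 0" using t by simp
      show "((p-1) * (T - t) * (c * \<bar>ln (T - t)\<bar>) powr \<alpha>) powr (-1/(p-1)) =
        kappa p \<alpha> * (T - t) powr (-1 / (p - 1)) * \<bar>ln (T - t)\<bar> powr (-\<alpha> / (p - 1))"
        unfolding c_def by (rule kappa_alg[OF p1 s l])
    qed
  qed
qed

end

theorem lemmaA1:
  fixes p \<alpha> T :: real
  assumes "p > 1" and "T > 0"
  shows "(\<exists>\<psi>. blowup_solution p \<alpha> T \<psi>) \<and>
         (\<forall>\<psi>1 \<psi>2. blowup_solution p \<alpha> T \<psi>1 \<longrightarrow> blowup_solution p \<alpha> T \<psi>2 \<longrightarrow>
              (\<forall>t<T. \<psi>1 t = \<psi>2 t)) \<and>
         (\<forall>\<psi>. blowup_solution p \<alpha> T \<psi> \<longrightarrow>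
              \<psi> \<sim>[at_left T] (\<lambda>t. kappa p \<alpha> * (T - t) powr (-1 / (p - 1)) *
                                       \<bar>ln (T - t)\<bar> powr (-\<alpha> / (p - 1))))"
proof -
  obtain H where HD: "\<forall>x>0. (H has_real_derivative hf p \<alpha> x) (at x)"
    using antideriv[OF hf_cont[of p \<alpha>]] by blast
  have HD': "\<And>x. x > 0 \<Longrightarrow> (H has_real_derivative hf p \<alpha> x) (at x)" using HD by simp
  have 1: "\<exists>\<psi>. blowup_solution p \<alpha> T \<psi>" by (rule exists_sol[OF assms(1) HD'])
  have 2: "\<forall>\<psi>1 \<psi>2. blowup_solution p \<alpha> T \<psi>1 \<longrightarrow> blowup_solution p \<alpha> T \<psi>2 \<longrightarrow>
              (\<forall>t<T. \<psi>1 t = \<psi>2 t)"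
  proof (intro allI impI)
    fix \<psi>1 \<psi>2 t assume a: "blowup_solution p \<alpha> T \<psi>1" "blowup_solution p \<alpha> T \<psi>2" "t < T"
    have "GG H (\<psi>1 t) = GG H (\<psi>2 t)"
      using sol_char[OF assms(1) HD' a(1,3)] sol_char[OF assms(1) HD' a(2,3)] by simp
    moreover have "\<psi>1 t > 0" "\<psi>2 t > 0" using a unfolding blowup_solution_def by simp_all
    ultimately show "\<psi>1 t = \<psi>2 t" using G_inj[OF assms(1) HD'] by simp
  qed
  have 3: "\<forall>\<psi>. blowup_solution p \<alpha> T \<psi> \<longrightarrow>
              \<psi> \<sim>[at_left T] (\<lambda>t. kappa p \<alpha> * (T - t) powr (-1 / (p - 1)) *
                                       \<bar>ln (T - t)\<bar> powr (-\<alpha> / (p - 1)))"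
  proof (intro allI impI)
    fix \<psi> assume a: "blowup_solution p \<alpha> T \<psi>"
    show "\<psi> \<sim>[at_left T] (\<lambda>t. kappa p \<alpha> * (T - t) powr (-1 / (p - 1)) *
                                       \<bar>ln (T - t)\<bar> powr (-\<alpha> / (p - 1)))"
      by (rule asymp_sol[where H=H, OF assms(1) _ a]) (simp add: HD')
  qed
  show ?thesis using 1 2 3 by (intro conjI)
qed

end
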